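(* For every positive integer $d$ there is a convex lattice polytope in $\mathbb{R}^d$ (all vertices in $\mathbb{Z}^d$) with at least $2d$ vertices, containing no point of $\mathbb{Z}^d$ in its interior, all of whose facets are simplices. *)

theory Defs
  imports "HOL-Analysis.Analysis"
begin

definition lattice_point :: "real ^ 'n \<Rightarrow> bool" where
  "lattice_point x \<longleftrightarrow> (\<forall>i. x $ i \<in> \<int>)"

end

theory Submission
  imports Defs
begin

definition aa :: "'n::finite \<Rightarrow> real^'n" where
  "aa i = (\<chi> k. if k = i \<and> i \<noteq> undefined then 1 else 0)"
definition bb :: "'n::finite \<Rightarrow> real^'n" where
  "bb i = (\<chi> k. 1 - aa i $ k)"
definition cc :: "real^'n::finite" where "cc = (\<chi> k. 1/2)"
definition ww :: "'n::finite \<Rightarrow> real^'n" where "ww i = aa i - cc"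
definition VV :: "(real^'n::finite) set" where "VV = range aa \<union> range bb"

lemma aa_nth: "aa i $ k = (if k = i \<and> i \<noteq> undefined then 1 else 0)"
  by (simp add: aa_def)
lemma bb_nth: "bb i $ k = (if k = i \<and> i \<noteq> undefined then 0 else 1)"
  by (simp add: bb_def aa_def)

lemma inj_aa: "inj aa"
proof (rule injI)
  fix i j :: "'n::finite" assume h: "aa i = aa j"
  show "i = j"
  proof (cases "i = undefined")
    case True
    then show ?thesis using arg_cong[OF h, of "\<lambda>v. v $ j"] by (auto simp: aa_nth split: if_splits)
  next
    case False
    then show ?thesis using arg_cong[OF h, of "\<lambda>v. v $ i"] by (auto simp: aa_nth split: if_splits)
  qed
qed

lemma inj_bb: "inj bb"
proof (rule injI)
  fix i j :: "'n::finite" assume h: "bb i = bb j"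
  have "aa i $ k = aa j $ k" for k using arg_cong[OF h, of "\<lambda>v. v $ k"] by (simp add: bb_def)
  then have "aa i = aa j" by (simp add: vec_eq_iff)
  then show "i = j" by (rule injD[OF inj_aa])
qed

lemma aa_neq_bb: "aa i \<noteq> bb j"
proof
  assume "aa i = bb j"
  then have "aa i $ undefined = bb j $ undefined" by simp
  then show False by (simp add: aa_nth bb_nth split: if_splits)
qed

lemma finite_VV: "finite VV" by (simp add: VV_def)

lemma card_VV: "card (VV :: (real^'n::finite) set) = 2 * CARD('n)"
proof -
  have "card (range aa \<union> range (bb::'n \<Rightarrow> _)) = card (range (aa::'n \<Rightarrow> _)) + card (range (bb::'n \<Rightarrow> _))"
    by (rule card_Un_disjoint) (auto simp: aa_neq_bb)
  also have "\<dots> = 2 * CARD('n)"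
  proof -
    have "card (range (aa::'n \<Rightarrow> real^'n)) = CARD('n)" using inj_aa by (rule card_image)
    moreover have "card (range (bb::'n \<Rightarrow> real^'n)) = CARD('n)" using inj_bb by (rule card_image)
    ultimately show ?thesis by simp
  qed
  finally show ?thesis by (simp add: VV_def)
qed

lemma VV_01: "v \<in> VV \<Longrightarrow> v $ k = 0 \<or> v $ k = 1"
  by (auto simp: VV_def aa_nth bb_nth split: if_splits)

lemma VV_lattice: "v \<in> VV \<Longrightarrow> lattice_point v"
  unfolding lattice_point_def using VV_01 by (metis Ints_0 Ints_1)

definition cube :: "(real^'n::finite) set" where "cube = cbox 0 (\<chi> k. 1)"

lemma VV_cube: "VV \<subseteq> cube"
proof
  fix v :: "real^'n" assume v: "v \<in> VV"
  have "\<forall>k. 0 \<le> v $ k \<and> v $ k \<le> 1" using VV_01[OF v] by (metis order_refl zero_le_one)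
  then show "v \<in> cube" by (simp add: cube_def mem_box_cart)
qed

lemma hull_cube: "convex hull VV \<subseteq> cube"
  by (metis VV_cube convex_box(1) cube_def hull_minimal)

lemma seg01:
  fixes a b u v :: real
  assumes "0 \<le> a" "a \<le> 1" "0 \<le> b" "b \<le> 1" "0 < u" "u < 1" "v = (1-u)*a + u*b" "v = 0 \<or> v = 1"
  shows "a = b"
proof -
  have p1: "0 \<le> (1-u)*a" "0 \<le> u*b" "0 \<le> (1-u)*(1-a)" "0 \<le> u*(1-b)"
    using assms(1-6) by simp_all
  from assms(8) show ?thesis
  proof
    assume "v = 0"
    then have "(1-u)*a = 0" "u*b = 0" using p1 assms(7) by linarith+
    then show ?thesis using assms(5,6) by simp
  next
    assume "v = 1"
    then have "(1-u)*(1-a) + u*(1-b) = 0" using assms(7) by (simp add: algebra_simps)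
    then have "(1-u)*(1-a) = 0" "u*(1-b) = 0" using p1 by linarith+
    then show ?thesis using assms(5,6) by simp
  qed
qed

lemma VV_extreme: assumes "v \<in> VV" shows "v extreme_point_of convex hull VV"
  unfolding extreme_point_of_def
proof (intro conjI ballI notI)
  show "v \<in> convex hull VV" by (rule hull_inc[OF assms])
  fix x y assume x: "x \<in> convex hull VV" and y: "y \<in> convex hull VV" and v: "v \<in> open_segment x y"
  then obtain u where u: "x \<noteq> y" "0 < u" "u < 1" "v = (1-u) *\<^sub>R x + u *\<^sub>R y"
    by (auto simp: in_segment)
  have "x $ k = y $ k" for k
  proof -
    have xk: "0 \<le> x $ k" "x $ k \<le> 1" using x hull_cube by (auto simp: cube_def mem_box_cart)
    have yk: "0 \<le> y $ k" "y $ k \<le> 1" using y hull_cube by (auto simp: cube_def mem_box_cart)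
    have vk: "v $ k = (1-u) * x $ k + u * y $ k" using u by simp
    have "v $ k = 0 \<or> v $ k = 1" by (rule VV_01[OF assms])
    then show ?thesis by (rule seg01[OF xk yk u(2) u(3) vk])
  qed
  then show False using u(1) by (simp add: vec_eq_iff)
qed

lemma extreme_VV: "{v. v extreme_point_of convex hull VV} = VV"
  using VV_extreme extreme_points_of_convex_hull by blast

lemma interior_free: "x \<in> interior (convex hull VV) \<Longrightarrow> \<not> lattice_point x"
proof
  assume "x \<in> interior (convex hull VV)" "lattice_point x"
  then have "x \<in> interior cube" using hull_cube interior_mono by blast
  then have "0 < x $ undefined \<and> x $ undefined < 1" by (simp add: cube_def mem_box_cart)
  moreover obtain z where "x $ undefined = of_int z" using \<open>lattice_point x\<close>
    unfolding lattice_point_def by (meson Ints_cases)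
  ultimately show False by auto
qed

lemma span_VV: "span (VV :: (real^'n::finite) set) = UNIV"
proof -
  have ax: "axis k (1::real) \<in> span (VV :: (real^'n) set)" for k :: 'n
  proof (cases "k = undefined")
    case False
    then have "aa k = axis k 1" by (simp add: vec_eq_iff aa_nth axis_def)
    moreover have "aa k \<in> VV" by (simp add: VV_def)
    then have "aa k \<in> span VV" by (rule span_base)
    ultimately show ?thesis by simp
  next
    case True
    have "axis k 1 = bb k - (\<Sum>j\<in>UNIV-{k}. aa j)"
    proof (subst vec_eq_iff, intro allI)
      fix m
      have "(\<Sum>j\<in>UNIV-{k}. aa j $ m) = (\<Sum>j\<in>UNIV-{k}. if j = m then 1 else 0)"
        using True by (intro sum.cong) (auto simp: aa_nth)
      also have "\<dots> = (if m = k then 0 else 1)" by simp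
      finally show "axis k 1 $ m = (bb k - (\<Sum>j\<in>UNIV-{k}. aa j)) $ m"
        using True by (simp add: bb_nth axis_def)
    qed
    moreover have "bb k \<in> span VV" by (simp add: VV_def span_base)
    moreover have "(\<Sum>j\<in>UNIV-{k}. aa j) \<in> span VV"
      by (intro span_sum) (simp add: VV_def span_base)
    ultimately show ?thesis by (simp add: span_diff)
  qed
  have "Basis \<subseteq> span (VV :: (real^'n) set)"
    using ax by (auto simp: Basis_vec_def)
  then have "span Basis \<subseteq> span (VV :: (real^'n) set)" by (rule span_minimal) (rule subspace_span)
  then show ?thesis by auto
qed

lemma aff_dim_P: "aff_dim (convex hull (VV :: (real^'n::finite) set)) = int CARD('n)"
proof -
  have "aa undefined \<in> VV" by (simp add: VV_def)
  moreover have "aa undefined = (0::real^'n)" by (simp add: vec_eq_iff aa_nth)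
  ultimately have "0 \<in> affine hull (VV :: (real^'n) set)" by (metis hull_inc)
  then have "affine hull (VV :: (real^'n) set) = UNIV" by (simp add: affine_hull_span_0 span_VV)
  then have "aff_dim (VV :: (real^'n) set) = DIM(real^'n)" using aff_dim_eq_full[of "VV :: (real^'n) set"] by simp
  then show ?thesis by (simp add: aff_dim_convex_hull)
qed

lemma ww_nth: "ww i $ m = (if m = i \<and> i \<noteq> undefined then 1 else 0) - 1/2"
  by (simp add: ww_def aa_nth cc_def)

lemma bb_cc: "bb i - cc = - ww i"
  by (simp add: vec_eq_iff ww_nth bb_nth cc_def)

lemma ww_indep:
  fixes l :: "'n::finite \<Rightarrow> real"
  assumes "(\<Sum>i\<in>UNIV. l i *\<^sub>R ww i) = 0"
  shows "l k = 0"
proof -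
  have c: "(if m \<noteq> undefined then l m else 0) - sum l UNIV / 2 = 0" for m
  proof -
    have "0 = (\<Sum>i\<in>UNIV. l i *\<^sub>R ww i) $ m" using assms by simp
    also have "\<dots> = (\<Sum>i\<in>UNIV. l i * (if m = i \<and> i \<noteq> undefined then 1 else 0) - l i / 2)"
      by (simp add: ww_nth algebra_simps)
    also have "\<dots> = (\<Sum>i\<in>UNIV. l i * (if m = i \<and> i \<noteq> undefined then 1 else 0)) - sum l UNIV / 2"
      by (simp only: sum_subtractf sum_divide_distrib[symmetric])
    also have "(\<Sum>i\<in>UNIV. l i * (if m = i \<and> i \<noteq> undefined then 1 else 0)) = (if m \<noteq> undefined then l m else 0)"
    proof -
      have "(\<Sum>i\<in>UNIV. l i * (if m = i \<and> i \<noteq> undefined then 1 else 0)) = (\<Sum>i\<in>UNIV. if i = m then (if m \<noteq> undefined then l m else 0) else 0)"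
        by (intro sum.cong) auto
      then show ?thesis by simp
    qed
    finally show ?thesis by simp
  qed
  have s0: "sum l UNIV = 0" using c[of undefined] by simp
  have o: "m \<noteq> undefined \<Longrightarrow> l m = 0" for m using c[of m] s0 by simp
  have "sum l UNIV = l undefined + sum l (UNIV - {undefined})"
    by (simp add: sum.remove)
  moreover have "sum l (UNIV - {undefined}) = 0" using o by (intro sum.neutral) auto
  ultimately have "l undefined = 0" using s0 by simp
  then show ?thesis using o by (cases "k = undefined") auto
qed

lemma sum_VV:
  assumes "S \<subseteq> (VV :: (real^'n::finite) set)"
  shows "sum g S = (\<Sum>i\<in>UNIV. if aa i \<in> S then g (aa i) else 0) + (\<Sum>i\<in>UNIV. if bb i \<in> S then g (bb i) else 0)"
proof -
  have S: "S = aa ` {i. aa i \<in> S} \<union> bb ` {i. bb i \<in> S}" using assms by (auto simp: VV_def)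
  have "sum g S = sum g (aa ` {i. aa i \<in> S}) + sum g (bb ` {i. bb i \<in> S})"
    by (subst S, rule sum.union_disjoint) (auto simp: aa_neq_bb)
  also have "sum g (aa ` {i. aa i \<in> S}) = (\<Sum>i\<in>{i. aa i \<in> S}. g (aa i))"
    by (rule sum.reindex_cong[where l=aa]) (auto intro: inj_on_subset[OF inj_aa])
  also have "sum g (bb ` {i. bb i \<in> S}) = (\<Sum>i\<in>{i. bb i \<in> S}. g (bb i))"
    by (rule sum.reindex_cong[where l=bb]) (auto intro: inj_on_subset[OF inj_bb])
  finally show ?thesis by (simp add: sum.inter_filter[symmetric])
qed

lemma cc_mid: "cc = midpoint (aa i) (bb i)"
  by (simp add: vec_eq_iff midpoint_def cc_def bb_nth aa_nth)

lemma facet_simplex: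
  assumes F: "F facet_of convex hull (VV :: (real^'n::finite) set)"
  shows "\<exists>k. k simplex F"
proof -
  have Ff: "F face_of convex hull VV" using F by (simp add: facet_of_def)
  obtain S where SV: "S \<subseteq> VV" and FS: "F = convex hull S"
    using face_of_convex_hull_subset[OF finite_imp_compact[OF finite_VV] Ff] by blast
  have fin: "finite S" using SV finite_VV finite_subset by blast
  have nopair: "\<not> (aa i \<in> S \<and> bb i \<in> S)" for i
  proof
    assume h: "aa i \<in> S \<and> bb i \<in> S"
    have cvF: "convex F" by (rule face_of_imp_convex[OF Ff])
    have aF: "aa i \<in> F" unfolding FS using h by (simp add: hull_inc)
    have bF: "bb i \<in> F" unfolding FS using h by (simp add: hull_inc)
    have seg: "closed_segment (aa i) (bb i) \<subseteq> F" by (rule closed_segment_subset[OF aF bF cvF])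
    have "cc \<in> closed_segment (aa i) (bb i)" unfolding cc_mid[of i] by (rule midpoint_in_closed_segment)
    then have ccF: "cc \<in> F" by (rule subsetD[OF seg])
    have ab: "aa j \<in> F \<and> bb j \<in> F" for j
    proof -
      have a1: "aa j \<in> convex hull VV" by (rule hull_inc) (simp add: VV_def)
      have b1: "bb j \<in> convex hull VV" by (rule hull_inc) (simp add: VV_def)
      have o: "cc \<in> open_segment (aa j) (bb j)" unfolding cc_mid[of j] using aa_neq_bb[of j j]
        by simp
      have "\<forall>a\<in>convex hull VV. \<forall>b\<in>convex hull VV. \<forall>x\<in>F. x \<in> open_segment a b \<longrightarrow> a \<in> F \<and> b \<in> F"
        using Ff unfolding face_of_def by (elim conjE)
      note fo = this
      from bspec[OF bspec[OF bspec[OF fo a1] b1] ccF] o show ?thesis by (rule mp)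
    qed
    have "VV \<subseteq> F"
    proof
      fix v assume "v \<in> (VV :: (real^'n) set)"
      then obtain j where "v = aa j \<or> v = bb j" by (auto simp: VV_def)
      then show "v \<in> F" using ab[of j] by (elim disjE) simp_all
    qed
    then have "convex hull VV \<subseteq> F" using cvF by (rule hull_minimal)
    moreover have "F \<subseteq> convex hull VV" by (rule face_of_imp_subset[OF Ff])
    ultimately have "F = convex hull VV" by (rule subset_antisym[rotated])
    then show False using F by (simp add: facet_of_def)
  qed
  have indep: "\<not> affine_dependent S"
  proof
    assume "affine_dependent S"
    then obtain U where U0: "sum U S = 0" and v: "\<exists>v\<in>S. U v \<noteq> 0" and U1: "(\<Sum>v\<in>S. U v *\<^sub>R v) = 0"
      using affine_dependent_explicit_finite[OF fin] by blast
    define l where "l i = (if aa i \<in> S then U (aa i) else 0) - (if bb i \<in> S then U (bb i) else 0)" for i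
    have "(\<Sum>v\<in>S. U v *\<^sub>R (v - cc)) = (\<Sum>v\<in>S. U v *\<^sub>R v) - sum U S *\<^sub>R cc"
      by (simp add: scaleR_diff_right sum_subtractf scaleR_sum_left)
    then have "0 = (\<Sum>v\<in>S. U v *\<^sub>R (v - cc))" using U0 U1 by simp
    also have "\<dots> = (\<Sum>i\<in>UNIV. if aa i \<in> S then U (aa i) *\<^sub>R (aa i - cc) else 0) + (\<Sum>i\<in>UNIV. if bb i \<in> S then U (bb i) *\<^sub>R (bb i - cc) else 0)"
      by (rule sum_VV[OF SV])
    also have "\<dots> = (\<Sum>i\<in>UNIV. (if aa i \<in> S then U (aa i) *\<^sub>R (aa i - cc) else 0) + (if bb i \<in> S then U (bb i) *\<^sub>R (bb i - cc) else 0))"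
      by (rule sum.distrib[symmetric])
    also have "\<dots> = (\<Sum>i\<in>UNIV. l i *\<^sub>R ww i)"
    proof (rule sum.cong)
      fix i :: 'n
      have e: "aa i - cc = ww i" by (simp add: ww_def)
      show "(if aa i \<in> S then U (aa i) *\<^sub>R (aa i - cc) else 0) + (if bb i \<in> S then U (bb i) *\<^sub>R (bb i - cc) else 0) = l i *\<^sub>R ww i"
        unfolding e bb_cc l_def by (simp add: scaleR_diff_left)
    qed simp
    finally have "(\<Sum>i\<in>UNIV. l i *\<^sub>R ww i) = 0" by (rule sym)
    then have l0: "\<And>i. l i = 0" by (rule ww_indep)
    obtain v where vS: "v \<in> S" "U v \<noteq> 0" using v by blast
    then have "v \<in> VV" using SV by blast
    then obtain i where "v = aa i \<or> v = bb i" by (auto simp: VV_def)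
    then show False
    proof
      assume "v = aa i"
      then have "l i = U v" using vS nopair[of i] by (simp add: l_def)
      then show False using l0 vS by simp
    next
      assume "v = bb i"
      then have "l i = - U v" using vS nopair[of i] by (simp add: l_def)
      then show False using l0 vS by simp
    qed
  qed
  have "(int (card S) - 1) simplex F"
    unfolding simplex_def using indep FS by auto
  then show ?thesis by blast
qed


theorem proposition16:
  shows "\<exists>P :: (real ^ 'n) set.
           polytope P \<and> aff_dim P = int CARD('n) \<and>
           (\<forall>v. v extreme_point_of P \<longrightarrow> lattice_point v) \<and>
           card {v. v extreme_point_of P} \<ge> 2 * CARD('n) \<and>
           (\<forall>x \<in> interior P. \<not> lattice_point x) \<and>
           (\<forall>F. F facet_of P \<longrightarrow> (\<exists>k. k simplex F))"
proof -
  let ?P = "convex hull (VV :: (real^'n) set)"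
  have h1: "polytope ?P" by (rule polytope_convex_hull[OF finite_VV])
  have h2: "aff_dim ?P = int CARD('n)" by (rule aff_dim_P)
  have h3: "\<forall>v. v extreme_point_of ?P \<longrightarrow> lattice_point v"
  proof (intro allI impI)
    fix v assume "v extreme_point_of ?P"
    then have "v \<in> {v. v extreme_point_of ?P}" by simp
    then have "v \<in> VV" by (simp only: extreme_VV)
    then show "lattice_point v" by (rule VV_lattice)
  qed
  have h4: "card {v. v extreme_point_of ?P} \<ge> 2 * CARD('n)"
    by (simp only: extreme_VV card_VV order_refl)
  have h5: "\<forall>x \<in> interior ?P. \<not> lattice_point x"
  proof
    fix x assume "x \<in> interior ?P"
    then show "\<not> lattice_point x" by (rule interior_free)
  qed
  have h6: "\<forall>F. F facet_of ?P \<longrightarrow> (\<exists>k. k simplex F)"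
  proof (intro allI impI)
    fix F assume "F facet_of ?P"
    then show "\<exists>k. k simplex F" by (rule facet_simplex)
  qed
  show ?thesis
    apply (rule exI[of _ ?P])
    apply (intro conjI)
         apply (fact h1)
        apply (fact h2)
       apply (fact h3)
      apply (fact h4)
     apply (fact h5)
    apply (fact h6)
    done
qed

end
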